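(* Let $(G^{(m)})_{m\ge1}$ be a sequence of finite simple graphs, and for each $m$ let $C_m\subseteq V(G^{(m)})$ be a clique (a set of pairwise adjacent vertices) in $G^{(m)}$. Let $S_m\subseteq C_m$ be the set of non-gateway vertices of $C_m$, and suppose $|S_m|\to\infty$ as $m\to\infty$. Let $x_m\in S_m$. Then for every fixed $t\ge0$, $$\lim_{m\to\infty}P^{x_m}_{G^{(m)},t}(x_m)=1.$$
   Context: For a finite simple graph $G$, $L_G=D_G-A_G$ is its Laplacian ($A_G$ adjacency matrix, $D_G$ diagonal degree matrix). The continuous-time quantum walk (CTQW) on $G$ has evolution operator $U_{G,t}=e^{\sqrt{-1}\,tL_G}$ ($t\ge0$), and the transition probability is $P^x_{G,t}(y)=|(U_{G,t})_{x,y}|^2$ for $x,y\in V(G)$. If $C$ is a clique in $G$, a vertex $v\in C$ is a gateway vertex of $C$ if there is an edge $(v,w)$ of $G$ with $w\in V(G)\setminus C$; the number of gateway vertices is $n_g$ and $|C|=n_c$, so $|S|=n_c-n_g$ for the set $S$ of non-gateway vertices. *)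

theory Defs
  imports Complex_Main
begin

definition simple_graph :: "'a set \<Rightarrow> ('a \<Rightarrow> 'a \<Rightarrow> bool) \<Rightarrow> bool" where
  "simple_graph V E \<longleftrightarrow> finite V \<and> (\<forall>x y. E x y \<longrightarrow> E y x)
     \<and> (\<forall>x. \<not> E x x) \<and> (\<forall>x y. E x y \<longrightarrow> x \<in> V \<and> y \<in> V)"

definition degree :: "'a set \<Rightarrow> ('a \<Rightarrow> 'a \<Rightarrow> bool) \<Rightarrow> 'a \<Rightarrow> nat" where
  "degree V E x = card {y \<in> V. E x y}"

definition laplacian :: "'a set \<Rightarrow> ('a \<Rightarrow> 'a \<Rightarrow> bool) \<Rightarrow> 'a \<Rightarrow> 'a \<Rightarrow> complex" where
  "laplacian V E x y =
     (if x = y then of_nat (degree V E x) else 0) - (if E x y then 1 else 0)"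

fun mat_pow :: "'a set \<Rightarrow> ('a \<Rightarrow> 'a \<Rightarrow> complex) \<Rightarrow> nat \<Rightarrow> 'a \<Rightarrow> 'a \<Rightarrow> complex" where
  "mat_pow V M 0 x y = (if x = y then 1 else 0)"
| "mat_pow V M (Suc k) x y = (\<Sum>z\<in>V. M x z * mat_pow V M k z y)"

definition mat_exp :: "'a set \<Rightarrow> ('a \<Rightarrow> 'a \<Rightarrow> complex) \<Rightarrow> 'a \<Rightarrow> 'a \<Rightarrow> complex" where
  "mat_exp V M x y = (\<Sum>k. mat_pow V M k x y / of_nat (fact k))"

definition ctqw_U :: "'a set \<Rightarrow> ('a \<Rightarrow> 'a \<Rightarrow> bool) \<Rightarrow> real \<Rightarrow> 'a \<Rightarrow> 'a \<Rightarrow> complex" where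
  "ctqw_U V E t = mat_exp V (\<lambda>x y. \<i> * complex_of_real t * laplacian V E x y)"

definition ctqw_prob :: "'a set \<Rightarrow> ('a \<Rightarrow> 'a \<Rightarrow> bool) \<Rightarrow> real \<Rightarrow> 'a \<Rightarrow> 'a \<Rightarrow> real" where
  "ctqw_prob V E t x y = (cmod (ctqw_U V E t x y))\<^sup>2"

definition is_clique :: "'a set \<Rightarrow> ('a \<Rightarrow> 'a \<Rightarrow> bool) \<Rightarrow> 'a set \<Rightarrow> bool" where
  "is_clique V E C \<longleftrightarrow> C \<subseteq> V \<and> (\<forall>x\<in>C. \<forall>y\<in>C. x \<noteq> y \<longrightarrow> E x y)"

definition gateway_vertices :: "'a set \<Rightarrow> ('a \<Rightarrow> 'a \<Rightarrow> bool) \<Rightarrow> 'a set \<Rightarrow> 'a set" where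
  "gateway_vertices V E C = {v \<in> C. \<exists>w \<in> V - C. E v w}"

definition non_gateway_vertices :: "'a set \<Rightarrow> ('a \<Rightarrow> 'a \<Rightarrow> bool) \<Rightarrow> 'a set \<Rightarrow> 'a set" where
  "non_gateway_vertices V E C = C - gateway_vertices V E C"

end

theory Submission
  imports Defs
begin

lemma mat_pow_add:
  assumes "finite V" "x \<in> V"
  shows "mat_pow V M (k+l) x z = (\<Sum>y\<in>V. mat_pow V M k x y * mat_pow V M l y z)"
  using assms(2)
proof (induction k arbitrary: x)
  case 0
  then show ?case using assms(1) by (simp add: sum.delta if_distrib[of "\<lambda>u. u * _"] cong: if_cong)
next
  case (Suc k)
  let ?P = "mat_pow V M"
  have "?P (Suc k + l) x z = (\<Sum>w\<in>V. M x w * (\<Sum>y\<in>V. ?P k w y * ?P l y z))"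
    using Suc.IH by simp
  also have "\<dots> = (\<Sum>w\<in>V. \<Sum>y\<in>V. M x w * (?P k w y * ?P l y z))"
    by (simp add: sum_distrib_left)
  also have "\<dots> = (\<Sum>y\<in>V. \<Sum>w\<in>V. M x w * (?P k w y * ?P l y z))"
    by (rule sum.swap)
  also have "\<dots> = (\<Sum>y\<in>V. (\<Sum>w\<in>V. M x w * ?P k w y) * ?P l y z)"
    by (simp add: sum_distrib_right mult.assoc)
  finally show ?case by simp
qed

lemma mat_pow_Suc_right:
  assumes "finite V" "x \<in> V" "y \<in> V"
  shows "mat_pow V M (Suc k) x y = (\<Sum>z\<in>V. mat_pow V M k x z * M z y)"
proof -
  have "mat_pow V M (k + 1) x y = (\<Sum>z\<in>V. mat_pow V M k x z * mat_pow V M 1 z y)"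
    by (rule mat_pow_add[OF assms(1,2)])
  moreover have "\<And>z. mat_pow V M 1 z y = M z y"
    using assms(1,3) by (simp add: if_distrib sum.delta' cong: if_cong)
  ultimately show ?thesis by simp
qed

lemma mat_pow_sym:
  assumes "finite V" "\<And>a b. a \<in> V \<Longrightarrow> b \<in> V \<Longrightarrow> M a b = M b a"
  shows "a \<in> V \<Longrightarrow> b \<in> V \<Longrightarrow> mat_pow V M k a b = mat_pow V M k b a"
proof (induction k arbitrary: a b)
  case 0
  then show ?case by auto
next
  case (Suc k)
  have "mat_pow V M (Suc k) a b = (\<Sum>z\<in>V. mat_pow V M k b z * M z a)"
    using Suc by (auto intro!: sum.cong simp: assms(2) mult.commute)
  also have "\<dots> = mat_pow V M (Suc k) b a"
    using mat_pow_Suc_right[OF assms(1) Suc.prems(2,1)] by simp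
  finally show ?case .
qed

lemma mat_pow_real:
  assumes "\<And>a b. cnj (M a b) = M a b"
  shows "cnj (mat_pow V M k a b) = mat_pow V M k a b"
  by (induction k arbitrary: a b) (auto simp: assms)

lemma mat_pow_bound:
  assumes "\<And>a b. norm (M a b) \<le> B" "B \<ge> 0"
  shows "norm (mat_pow V M k a b) \<le> (B * card V) ^ k"
proof (induction k arbitrary: a b)
  case 0
  then show ?case by auto
next
  case (Suc k)
  have "norm (mat_pow V M (Suc k) a b) \<le> (\<Sum>z\<in>V. norm (M a z * mat_pow V M k z b))"
    by (simp add: sum_norm_le)
  also have "\<dots> \<le> (\<Sum>z\<in>V. B * (B * card V) ^ k)"
    by (intro sum_mono) (auto simp: norm_mult intro!: mult_mono assms Suc.IH)
  also have "\<dots> = (B * card V) ^ Suc k" by simp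
  finally show ?case .
qed

lemma mat_pow_scale:
  "mat_pow V (\<lambda>a b. c * M a b) k x y = c ^ k * mat_pow V M k x y"
  by (induction k arbitrary: x y) (auto simp: sum_distrib_left mult_ac)

lemma summable_exp_like:
  fixes c :: complex
  assumes "\<And>k. norm (f k) \<le> R ^ k"
  shows "summable (\<lambda>k. norm (c ^ k * f k / of_nat (fact k)))"
proof (rule summable_comparison_test')
  show "summable (\<lambda>k. (norm c * R) ^ k / fact k)"
    using exp_converges[of "norm c * R"] by (simp add: sums_iff divide_inverse mult.commute)
  fix k :: nat
  have "norm (c ^ k * f k / of_nat (fact k)) = norm c ^ k * norm (f k) / fact k"
    by (simp add: norm_mult norm_divide norm_power)
  also have "\<dots> \<le> norm c ^ k * R ^ k / fact k"
    by (intro divide_right_mono mult_left_mono assms) auto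
  finally show "norm (norm (c ^ k * f k / of_nat (fact k))) \<le> (norm c * R) ^ k / fact k"
    by (simp add: power_mult_distrib)
qed

lemma binom_sum_fact:
  fixes c d :: complex
  shows "(\<Sum>i\<le>n. c ^ i * d ^ (n - i) / (of_nat (fact i) * of_nat (fact (n - i))))
         = (c + d) ^ n / of_nat (fact n)"
proof -
  have "(c + d) ^ n / of_nat (fact n) = (\<Sum>i\<le>n. of_nat (n choose i) * c ^ i * d ^ (n - i)) / of_nat (fact n)"
    by (simp add: binomial_ring)
  also have "\<dots> = (\<Sum>i\<le>n. of_nat (n choose i) * c ^ i * d ^ (n - i) / of_nat (fact n))"
    by (simp add: sum_divide_distrib)
  also have "\<dots> = (\<Sum>i\<le>n. c ^ i * d ^ (n - i) / (of_nat (fact i) * of_nat (fact (n - i))))"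
  proof (intro sum.cong refl)
    fix i assume "i \<in> {..n}"
    then have "i \<le> n" by simp
    then have "(of_nat (n choose i) :: complex) = fact n / (fact i * fact (n - i))"
      by (rule binomial_fact)
    then show "of_nat (n choose i) * c ^ i * d ^ (n - i) / of_nat (fact n)
       = c ^ i * d ^ (n - i) / (of_nat (fact i) * of_nat (fact (n - i)))"
      by (simp add: field_simps)
  qed
  finally show ?thesis by simp
qed

lemma unitary_row:
  fixes M :: "'a \<Rightarrow> 'a \<Rightarrow> complex" and t :: real
  assumes fin: "finite V" and xV: "x \<in> V"
    and sym: "\<And>a b. a \<in> V \<Longrightarrow> b \<in> V \<Longrightarrow> M a b = M b a"
    and re: "\<And>a b. cnj (M a b) = M a b"
    and bd: "\<And>a b. norm (M a b) \<le> B" and B0: "B \<ge> 0"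
  shows "(\<Sum>y\<in>V. (\<Sum>k. (\<i>*t)^k * mat_pow V M k x y / of_nat (fact k))
           * cnj (\<Sum>k. (\<i>*t)^k * mat_pow V M k x y / of_nat (fact k))) = 1"
proof -
  define c :: complex where "c = \<i> * t"
  define P where "P = mat_pow V M"
  define a where "a y k = c ^ k * P k x y / of_nat (fact k)" for y k
  define b where "b y k = cnj c ^ k * P k x y / of_nat (fact k)" for y k
  have Pb: "norm (P k u v) \<le> (B * card V) ^ k" for k u v
    unfolding P_def by (rule mat_pow_bound[OF bd B0])
  have sa: "summable (\<lambda>k. norm (a y k))" for y
    unfolding a_def by (rule summable_exp_like[OF Pb])
  have sb: "summable (\<lambda>k. norm (b y k))" for y
    unfolding b_def by (rule summable_exp_like[OF Pb])
  have cb: "cnj (a y k) = b y k" for y k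
    unfolding a_def b_def P_def using mat_pow_real[where M=M, OF re] by simp
  have conj: "cnj (suminf (a y)) = suminf (b y)" for y
  proof -
    have "a y sums suminf (a y)" using summable_norm_cancel[OF sa] by (simp add: summable_sums)
    then have "(\<lambda>k. cnj (a y k)) sums cnj (suminf (a y))" by (simp add: sums_cnj)
    then show ?thesis using cb by (simp add: sums_iff)
  qed
  have prod: "suminf (a y) * cnj (suminf (a y)) = (\<Sum>n. \<Sum>i\<le>n. a y i * b y (n - i))" for y
    using Cauchy_product[OF sa sb] conj by simp
  have sprod: "summable (\<lambda>n. \<Sum>i\<le>n. a y i * b y (n - i))" for y
    by (rule summable_Cauchy_product[OF sa sb])
  have cc: "c + cnj c = 0" unfolding c_def by (simp add: complex_eq_iff)
  have trm: "(\<Sum>y\<in>V. \<Sum>i\<le>n. a y i * b y (n - i)) = P n x x / of_nat (fact n) * 0 ^ n" for n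
  proof -
    have "(\<Sum>y\<in>V. \<Sum>i\<le>n. a y i * b y (n - i))
        = (\<Sum>i\<le>n. \<Sum>y\<in>V. c ^ i * cnj c ^ (n - i) / (of_nat (fact i) * of_nat (fact (n - i)))
              * (P i x y * P (n - i) y x))"
      unfolding a_def b_def
      by (subst sum.swap) (auto intro!: sum.cong simp: P_def mat_pow_sym[OF fin sym] xV)
    also have "\<dots> = (\<Sum>i\<le>n. c ^ i * cnj c ^ (n - i) / (of_nat (fact i) * of_nat (fact (n - i)))
              * P n x x)"
    proof (intro sum.cong refl)
      fix i assume "i \<in> {..n}"
      then have "P (i + (n - i)) x x = (\<Sum>y\<in>V. P i x y * P (n - i) y x)"
        unfolding P_def by (intro mat_pow_add fin xV)
      moreover have "i + (n - i) = n" using \<open>i \<in> {..n}\<close> by simp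
      ultimately show "(\<Sum>y\<in>V. c ^ i * cnj c ^ (n - i) / (of_nat (fact i) * of_nat (fact (n - i)))
              * (P i x y * P (n - i) y x)) = c ^ i * cnj c ^ (n - i) / (of_nat (fact i) * of_nat (fact (n - i)))
              * P n x x"
        by (simp add: sum_distrib_left)
    qed
    also have "\<dots> = (c + cnj c) ^ n / of_nat (fact n) * P n x x"
      by (simp only: sum_distrib_right[symmetric] binom_sum_fact)
    finally show ?thesis using cc by simp
  qed
  have "(\<Sum>y\<in>V. suminf (a y) * cnj (suminf (a y))) = (\<Sum>y\<in>V. \<Sum>n. \<Sum>i\<le>n. a y i * b y (n - i))"
    using prod by simp
  also have "\<dots> = (\<Sum>n. \<Sum>y\<in>V. \<Sum>i\<le>n. a y i * b y (n - i))"
    by (rule suminf_sum[symmetric]) (rule sprod)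
  also have "\<dots> = (\<Sum>n. P n x x / of_nat (fact n) * 0 ^ n)"
    using trm by simp
  also have "\<dots> = 1" by (subst powser_zero) (simp add: P_def)
  finally show ?thesis unfolding a_def c_def P_def by simp
qed

lemma mat_pow_eigen_diff:
  fixes M :: "'a \<Rightarrow> 'a \<Rightarrow> complex"
  assumes fin: "finite V" and xV: "x \<in> V" and yV: "y \<in> V"
    and ev: "\<And>a. M a x - M a y = lam * ((if a = x then 1 else 0) - (if a = y then 1 else 0))"
  shows "mat_pow V M k a x - mat_pow V M k a y = lam ^ k * ((if a = x then 1 else 0) - (if a = y then 1 else 0))"
proof (induction k arbitrary: a)
  case 0
  then show ?case by simp
next
  case (Suc k)
  have "mat_pow V M (Suc k) a x - mat_pow V M (Suc k) a y
      = (\<Sum>z\<in>V. M a z * (mat_pow V M k z x - mat_pow V M k z y))"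
    by (simp add: sum_subtractf right_diff_distrib)
  also have "\<dots> = (\<Sum>z\<in>V. lam ^ k * ((if z = x then M a z else 0) - (if z = y then M a z else 0)))"
    by (intro sum.cong refl) (simp add: Suc.IH algebra_simps)
  also have "\<dots> = lam ^ k * (M a x - M a y)"
    using fin xV yV by (simp add: sum_distrib_left[symmetric] sum_subtractf sum.delta')
  also have "\<dots> = lam ^ Suc k * ((if a = x then 1 else 0) - (if a = y then 1 else 0))"
    by (simp add: ev)
  finally show ?case .
qed

lemma exp_series_diff:
  fixes M :: "'a \<Rightarrow> 'a \<Rightarrow> complex" and c :: complex
  assumes fin: "finite V" and xV: "x \<in> V" and yV: "y \<in> V" and xy: "x \<noteq> y"
    and ev: "\<And>a. M a x - M a y = lam * ((if a = x then 1 else 0) - (if a = y then 1 else 0))"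
    and bd: "\<And>a b. norm (M a b) \<le> B" and B0: "B \<ge> 0"
  shows "(\<Sum>k. c^k * mat_pow V M k x x / of_nat (fact k)) - (\<Sum>k. c^k * mat_pow V M k x y / of_nat (fact k))
         = exp (c * lam)"
proof -
  have Pb: "norm (mat_pow V M k u v) \<le> (B * card V) ^ k" for k u v
    by (rule mat_pow_bound[OF bd B0])
  have s1: "summable (\<lambda>k. c^k * mat_pow V M k x u / of_nat (fact k))" for u
    by (rule summable_norm_cancel[OF summable_exp_like[OF Pb]])
  have "(\<Sum>k. c^k * mat_pow V M k x x / of_nat (fact k)) - (\<Sum>k. c^k * mat_pow V M k x y / of_nat (fact k))
      = (\<Sum>k. c^k * mat_pow V M k x x / of_nat (fact k) - c^k * mat_pow V M k x y / of_nat (fact k))"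
    using suminf_diff[OF s1[of x] s1[of y]] by simp
  also have "\<dots> = (\<Sum>k. (c * lam) ^ k / of_nat (fact k))"
  proof (intro suminf_cong)
    fix k
    have "c^k * mat_pow V M k x x / of_nat (fact k) - c^k * mat_pow V M k x y / of_nat (fact k)
       = c^k * (mat_pow V M k x x - mat_pow V M k x y) / of_nat (fact k)"
      by (simp add: diff_divide_distrib right_diff_distrib)
    also have "\<dots> = (c * lam) ^ k / of_nat (fact k)"
      using mat_pow_eigen_diff[OF fin xV yV ev, of k x] xy by (simp add: power_mult_distrib)
    finally show "c^k * mat_pow V M k x x / of_nat (fact k) - c^k * mat_pow V M k x y / of_nat (fact k)
       = (c * lam) ^ k / of_nat (fact k)" .
  qed
  also have "\<dots> = exp (c * lam)"
    using exp_converges[of "c * lam"] by (simp add: sums_iff scaleR_conv_of_real divide_inverse mult.commute)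
  finally show ?thesis .
qed

lemma lap_sym: "simple_graph V E \<Longrightarrow> laplacian V E a b = laplacian V E b a"
  unfolding laplacian_def simple_graph_def by auto

lemma lap_real: "cnj (laplacian V E a b) = laplacian V E a b"
  unfolding laplacian_def by simp

lemma lap_bound:
  assumes "simple_graph V E"
  shows "norm (laplacian V E a b) \<le> real (card V) + 1"
proof -
  have fin: "finite V" using assms by (simp add: simple_graph_def)
  have "degree V E a \<le> card V" unfolding degree_def by (rule card_mono[OF fin]) auto
  moreover have "\<not> E a a" using assms by (simp add: simple_graph_def)
  ultimately show ?thesis unfolding laplacian_def
    by (auto simp: norm_of_nat)
qed

lemma ctqw_U_series:
  "ctqw_U V E t a b = (\<Sum>k. (\<i>*t)^k * mat_pow V (laplacian V E) k a b / of_nat (fact k))"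
  unfolding ctqw_U_def mat_exp_def
  using mat_pow_scale[of V "\<i> * complex_of_real t" "laplacian V E"] by simp

lemma lap_eigen:
  assumes g: "simple_graph V E" and cl: "is_clique V E C"
    and xS: "x \<in> non_gateway_vertices V E C" and yS: "y \<in> non_gateway_vertices V E C"
  shows "laplacian V E a x - laplacian V E a y
         = of_nat (card C) * ((if a = x then 1 else 0) - (if a = y then 1 else 0))"
proof -
  have fin: "finite V" using g by (simp add: simple_graph_def)
  have CV: "C \<subseteq> V" using cl by (simp add: is_clique_def)
  have finC: "finite C" using fin CV finite_subset by blast
  have deg: "degree V E z = card C - 1" if zS: "z \<in> non_gateway_vertices V E C" for z
  proof -
    have zC: "z \<in> C" using zS by (simp add: non_gateway_vertices_def)
    have "{w \<in> V. E z w} = C - {z}"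
    proof
      show "{w \<in> V. E z w} \<subseteq> C - {z}"
        using zS g unfolding non_gateway_vertices_def gateway_vertices_def simple_graph_def by auto
      show "C - {z} \<subseteq> {w \<in> V. E z w}"
        using cl zC unfolding is_clique_def by auto
    qed
    then show ?thesis unfolding degree_def using zC finC by simp
  qed
  have out: "\<not> E z w" if "z \<in> non_gateway_vertices V E C" "w \<notin> C" for z w
    using that g unfolding non_gateway_vertices_def gateway_vertices_def simple_graph_def by auto
  have xC: "x \<in> C" and yC: "y \<in> C" using xS yS by (auto simp: non_gateway_vertices_def)
  have c1: "card C \<ge> 1" using xC finC by (metis One_nat_def Suc_leI card_gt_0_iff empty_iff)
  have sE: "E u v \<longleftrightarrow> E v u" for u v using g by (auto simp: simple_graph_def)
  have irr: "\<not> E u u" for u using g by (auto simp: simple_graph_def)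
  have Exy: "x \<noteq> y \<Longrightarrow> E x y" using cl xC yC by (auto simp: is_clique_def)
  show ?thesis
  proof (cases "x = y")
    case True then show ?thesis by simp
  next
    case False
    note xy = False
    show ?thesis
    proof (cases "a = x")
      case True
      then show ?thesis using xy Exy deg[OF xS] c1 irr
        by (simp add: laplacian_def of_nat_diff)
    next
      case ax: False
      show ?thesis
      proof (cases "a = y")
        case True
        then show ?thesis using xy Exy deg[OF yS] c1 irr sE
          by (simp add: laplacian_def of_nat_diff)
      next
        case ay: False
        have "E a x = E a y"
        proof (cases "a \<in> C")
          case True
          then show ?thesis using cl xC yC ax ay by (auto simp: is_clique_def)
        next
          case False
          then show ?thesis using out[OF xS False] out[OF yS False] sE by auto
        qed
        then show ?thesis using ax ay by (simp add: laplacian_def)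
      qed
    qed
  qed
qed

lemma key:
  fixes t :: real
  assumes g: "simple_graph V E" and cl: "is_clique V E C"
    and xS: "x \<in> non_gateway_vertices V E C"
  defines "d \<equiv> norm (ctqw_U V E t x x - exp (\<i> * t * of_nat (card C)))"
  shows "ctqw_prob V E t x x \<le> 1" "1 - 2 * d \<le> ctqw_prob V E t x x"
    "(real (card (non_gateway_vertices V E C)) - 1) * d ^ 2 \<le> 1"
proof -
  let ?S = "non_gateway_vertices V E C"
  let ?U = "ctqw_U V E t"
  let ?e = "exp (\<i> * t * of_nat (card C))"
  have fin: "finite V" using g by (simp add: simple_graph_def)
  have SV: "?S \<subseteq> V" using cl by (auto simp: is_clique_def non_gateway_vertices_def)
  have finS: "finite ?S" using fin SV finite_subset by blast
  have xV: "x \<in> V" using xS SV by auto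
  have B0: "real (card V) + 1 \<ge> 0" by simp
  have unit: "(\<Sum>y\<in>V. (norm (?U x y))^2) = 1"
  proof -
    have "(\<Sum>y\<in>V. ?U x y * cnj (?U x y)) = 1"
      unfolding ctqw_U_series
      by (rule unitary_row[OF fin xV lap_sym[OF g] lap_real lap_bound[OF g] B0])
    then have "complex_of_real (\<Sum>y\<in>V. (norm (?U x y))^2) = 1"
      by (simp only: of_real_sum complex_norm_square)
    then show ?thesis using of_real_eq_1_iff by blast
  qed
  have diff: "?U x y = ?U x x - ?e" if yS: "y \<in> ?S" "y \<noteq> x" for y
  proof -
    have "?U x x - ?U x y = exp ((\<i> * t) * of_nat (card C))"
      unfolding ctqw_U_series
      by (rule exp_series_diff[OF fin xV _ _ lap_eigen[OF g cl xS yS(1)] lap_bound[OF g] B0])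
        (use SV yS in auto)
    then show ?thesis by (simp add: algebra_simps)
  qed
  have "(\<Sum>y\<in>?S. (norm (?U x y))^2) \<le> (\<Sum>y\<in>V. (norm (?U x y))^2)"
    by (rule sum_mono2[OF fin SV]) auto
  moreover have "(\<Sum>y\<in>?S. (norm (?U x y))^2) = (norm (?U x x))^2 + (\<Sum>y\<in>?S - {x}. (norm (?U x y))^2)"
    by (rule sum.remove[OF finS xS])
  moreover have "(\<Sum>y\<in>?S - {x}. (norm (?U x y))^2) = real (card (?S - {x})) * d^2"
    using diff unfolding d_def by simp
  moreover have "real (card (?S - {x})) = real (card ?S) - 1"
  proof -
    have "card ?S \<ge> 1" using finS xS by (metis One_nat_def Suc_leI card_gt_0_iff empty_iff)
    then show ?thesis using finS xS by (simp add: of_nat_diff)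
  qed
  ultimately have main: "(norm (?U x x))^2 + (real (card ?S) - 1) * d^2 \<le> 1"
    using unit by simp
  have nn: "(real (card ?S) - 1) * d^2 \<ge> 0"
  proof -
    have "card ?S \<ge> 1" using finS xS by (metis One_nat_def Suc_leI card_gt_0_iff empty_iff)
    then show ?thesis by simp
  qed
  show "ctqw_prob V E t x x \<le> 1"
    unfolding ctqw_prob_def using main nn by linarith
  show "(real (card ?S) - 1) * d ^ 2 \<le> 1"
  proof -
    have "(norm (?U x x))^2 \<ge> 0" by simp
    then show ?thesis using main by linarith
  qed
  have ne: "norm ?e = 1" by (simp add: norm_exp_eq_Re)
  have "norm ?e \<le> norm (?e - ?U x x) + norm (?U x x)" by (metis diff_add_cancel norm_triangle_ineq)
  then have "1 - d \<le> norm (?U x x)" using ne unfolding d_def by (simp add: norm_minus_commute)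
  then show "1 - 2 * d \<le> ctqw_prob V E t x x"
  proof (cases "1 - d \<le> 0")
    case True
    have "d \<ge> 0" unfolding d_def by simp
    then have "1 - 2 * d \<le> 0" using True by linarith
    moreover have "(norm (?U x x))^2 \<ge> 0" by simp
    ultimately show ?thesis unfolding ctqw_prob_def by linarith
  next
    case False
    then have "(1 - d)^2 \<le> (norm (?U x x))^2"
      using \<open>1 - d \<le> norm (?U x x)\<close> by (intro power_mono) auto
    moreover have "1 - 2 * d \<le> (1 - d)^2" by (simp add: power2_eq_square algebra_simps)
    ultimately show ?thesis unfolding ctqw_prob_def by linarith
  qed
qed

theorem proposition3p2:
  fixes V :: "nat \<Rightarrow> 'a set" and E :: "nat \<Rightarrow> 'a \<Rightarrow> 'a \<Rightarrow> bool"
    and C :: "nat \<Rightarrow> 'a set" and x :: "nat \<Rightarrow> 'a" and t :: real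
  assumes graphs: "\<And>m. simple_graph (V m) (E m)"
    and cliques: "\<And>m. is_clique (V m) (E m) (C m)"
    and card_S: "filterlim (\<lambda>m. card (non_gateway_vertices (V m) (E m) (C m))) at_top sequentially"
    and x_in: "\<And>m. x m \<in> non_gateway_vertices (V m) (E m) (C m)"
    and t_nonneg: "t \<ge> 0"
  shows "(\<lambda>m. ctqw_prob (V m) (E m) t (x m) (x m)) \<longlonglongrightarrow> 1"
proof -
  define s where "s m = card (non_gateway_vertices (V m) (E m) (C m))" for m
  define d where "d m = norm (ctqw_U (V m) (E m) t (x m) (x m) - exp (\<i> * t * of_nat (card (C m))))" for m
  define g where "g m = 1 - 2 * sqrt (1 / (real (s m) - 1))" for m
  have sS: "filterlim s at_top sequentially" using card_S unfolding s_def by simp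
  have ev2: "eventually (\<lambda>m. 2 \<le> s m) sequentially"
    using sS unfolding filterlim_at_top by blast
  have r: "filterlim (\<lambda>m. real (s m)) at_top sequentially"
    using filterlim_compose[OF filterlim_real_sequentially sS] by (simp add: o_def)
  have "filterlim (\<lambda>m. -1 + real (s m)) at_top sequentially"
    by (rule filterlim_tendsto_add_at_top[OF tendsto_const r])
  then have "filterlim (\<lambda>m. real (s m) - 1) at_infinity sequentially"
    by (intro filterlim_at_top_imp_at_infinity) simp
  then have "(\<lambda>m. 1 / (real (s m) - 1)) \<longlonglongrightarrow> 0"
    by (rule tendsto_divide_0[OF tendsto_const])
  then have "(\<lambda>m. sqrt (1 / (real (s m) - 1))) \<longlonglongrightarrow> sqrt 0"
    by (intro tendsto_intros)
  then have "(\<lambda>m. 1 - 2 * sqrt (1 / (real (s m) - 1))) \<longlonglongrightarrow> 1 - 2 * sqrt 0"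
    by (rule tendsto_diff[OF tendsto_const tendsto_mult[OF tendsto_const]])
  then have lim_g: "g \<longlonglongrightarrow> 1" unfolding g_def by simp
  have lower: "eventually (\<lambda>m. g m \<le> ctqw_prob (V m) (E m) t (x m) (x m)) sequentially"
    using ev2
  proof (rule eventually_mono)
    fix m assume s2: "2 \<le> s m"
    note k = key[OF graphs cliques x_in, of m t]
    have pos: "real (s m) - 1 > 0" using s2 by simp
    have "(real (s m) - 1) * (d m)^2 \<le> 1" using k(3) unfolding s_def d_def by simp
    then have "(d m)^2 \<le> 1 / (real (s m) - 1)" using pos by (simp add: field_simps mult.commute)
    then have "d m \<le> sqrt (1 / (real (s m) - 1))" by (rule real_le_rsqrt)
    moreover have "1 - 2 * d m \<le> ctqw_prob (V m) (E m) t (x m) (x m)" using k(2) unfolding d_def by simp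
    ultimately show "g m \<le> ctqw_prob (V m) (E m) t (x m) (x m)" unfolding g_def by linarith
  qed
  have upper: "eventually (\<lambda>m. ctqw_prob (V m) (E m) t (x m) (x m) \<le> 1) sequentially"
    using key(1)[OF graphs cliques x_in] by simp
  show ?thesis by (rule tendsto_sandwich[OF lower upper lim_g tendsto_const])
qed

end
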